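(* Let $G$ be a finite group, $X\subseteq G$ a conjugacy class, and $V=\Bbbk X$ a Yetter–Drinfeld module over $\Bbbk G$ with basis $\{v_x\}_{x\in X}$, $v_x$ homogeneous of $G$-degree $x$, and $g\cdot v_y\in\Bbbk^\times v_{gyg^{-1}}$; let $q\colon X\times X\to\Bbbk^\times$ be the corresponding cocycle, defined by $x\cdot v_y=q(x,y)v_{x\triangleright y}$, so that the braiding is $c_q(v_x\otimes v_y)=q(x,y)\,v_{x\triangleright y}\otimes v_x$. Let $q'$ be a cocycle on $X$ twist-equivalent to $q$, and let $\mathcal B(X,q)$, $\mathcal B(X,q')$ be the Nichols algebras of $(\Bbbk X,c_q)$ and $(\Bbbk X,c_{q'})$. Then for every $d\in\mathbb N$ (with $d\ge2$), $\mathcal B(X,q)\cong\widehat{\mathcal B(X,q)}_d$ if and only if $\mathcal B(X,q')\cong\widehat{\mathcal B(X,q')}_d$, where the isomorphisms are the natural projections.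
   Context: A rack $(X,\triangleright)$ is a nonempty set with a binary operation such that each $x\triangleright-$ is bijective and $x\triangleright(y\triangleright z)=(x\triangleright y)\triangleright(x\triangleright z)$; here $x\triangleright y=xyx^{-1}$ in $G$. A $2$-cocycle of degree $1$ on $X$ is $q\colon X\times X\to\Bbbk^\times$ with $q(x,y\triangleright z)q(y,z)=q(x\triangleright y,x\triangleright z)q(x,z)$. Two such cocycles $q,q'$ on $X\subseteq G$ are twist-equivalent if there is a group $2$-cocycle $\sigma\colon G\times G\to\Bbbk^\times$ (i.e. $\sigma(x,y)\sigma(xy,z)=\sigma(y,z)\sigma(x,yz)$, $\sigma(x,1)=\sigma(1,x)=1$) with $q'(x,y)=\sigma(x,y)q(x,y)\sigma(x\triangleright y,x)^{-1}$ for all $x,y\in X$. For a vector space $V$ with a solution $c$ of the braid equation, $B_n$ (braid group with generators $\sigma_1,\dots,\sigma_{n-1}$) acts on $V^{\otimes n}$ by $\rho_n(\sigma_i)=\mathrm{id}^{\otimes(i-1)}\otimes c\otimes\mathrm{id}^{\otimes(n-i-1)}$; the Matsumoto section $M_n\colon\mathbb S_n\to B_n$ sends a reduced expression $s_{i_1}\cdots s_{i_l}$ to $\sigma_{i_1}\cdots\sigma_{i_l}$; the quantum symmetrizer is $Q_n=\sum_{w\in\mathbb S_n}\rho_n(M_n(w))$. The Nichols algebra is $\mathcal B(V,c)=T(V)/\bigoplus_{n\ge2}\ker Q_n$ (a connected bialgebra with $V$ primitive). For a connected bialgebra $B=T(B_1)/J$ generated in degree $1$ ($J$ a graded ideal and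 coideal in degrees $\ge2$), the $d$-atic cover is $\widehat B_d=T(B_1)/\big(\bigoplus_{m=2}^d(J\cap B_1^{\otimes m})\big)$ (quotient by the generated ideal); for $B=\mathcal B(V,c)$, $J\cap V^{\otimes m}=\ker Q_m$. *)

theory Defs
  imports "HOL.Modules" "HOL-Library.Function_Algebras" "HOL-Algebra.Group" "HOL-Combinatorics.Transposition" "HOL-Combinatorics.Permutations"
begin

definition rtri :: "('g, 'b) monoid_scheme \<Rightarrow> 'g \<Rightarrow> 'g \<Rightarrow> 'g" where
  "rtri G x y = x \<otimes>\<^bsub>G\<^esub> y \<otimes>\<^bsub>G\<^esub> inv\<^bsub>G\<^esub> x"

definition conj_class :: "('g, 'b) monoid_scheme \<Rightarrow> 'g set \<Rightarrow> bool" where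
  "conj_class G X = (\<exists>a \<in> carrier G. X = {g \<otimes>\<^bsub>G\<^esub> a \<otimes>\<^bsub>G\<^esub> inv\<^bsub>G\<^esub> g | g. g \<in> carrier G})"

definition rack_cocycle :: "('g \<Rightarrow> 'g \<Rightarrow> 'g) \<Rightarrow> 'g set \<Rightarrow> ('g \<Rightarrow> 'g \<Rightarrow> 'k::field) \<Rightarrow> bool" where
  "rack_cocycle tri X q =
     ((\<forall>x\<in>X. \<forall>y\<in>X. q x y \<noteq> 0) \<and>
      (\<forall>x\<in>X. \<forall>y\<in>X. \<forall>z\<in>X. q x (tri y z) * q y z = q (tri x y) (tri x z) * q x z))"

text \<open>The cocycle q comes from a Yetter-Drinfeld module structure on kX over kG:
  g . v_y = chi g y v_(g y g^-1), with chi g y nonzero, and q x y = chi x y.\<close>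
definition yd_cocycle :: "('g, 'b) monoid_scheme \<Rightarrow> 'g set \<Rightarrow> ('g \<Rightarrow> 'g \<Rightarrow> 'k::field) \<Rightarrow> bool" where
  "yd_cocycle G X q =
     (\<exists>chi :: 'g \<Rightarrow> 'g \<Rightarrow> 'k.
        (\<forall>g\<in>carrier G. \<forall>y\<in>X. chi g y \<noteq> 0) \<and>
        (\<forall>y\<in>X. chi \<one>\<^bsub>G\<^esub> y = 1) \<and>
        (\<forall>g\<in>carrier G. \<forall>h\<in>carrier G. \<forall>y\<in>X.
            chi (g \<otimes>\<^bsub>G\<^esub> h) y = chi g (rtri G h y) * chi h y) \<and>
        (\<forall>x\<in>X. \<forall>y\<in>X. q x y = chi x y))"

definition group_2cocycle :: "('g, 'b) monoid_scheme \<Rightarrow> ('g \<Rightarrow> 'g \<Rightarrow> 'k::field) \<Rightarrow> bool" where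
  "group_2cocycle G \<sigma> =
     ((\<forall>x\<in>carrier G. \<forall>y\<in>carrier G. \<sigma> x y \<noteq> 0) \<and>
      (\<forall>x\<in>carrier G. \<forall>y\<in>carrier G. \<forall>z\<in>carrier G.
          \<sigma> x y * \<sigma> (x \<otimes>\<^bsub>G\<^esub> y) z = \<sigma> y z * \<sigma> x (y \<otimes>\<^bsub>G\<^esub> z)) \<and>
      (\<forall>x\<in>carrier G. \<sigma> x \<one>\<^bsub>G\<^esub> = 1 \<and> \<sigma> \<one>\<^bsub>G\<^esub> x = 1))"

definition twist_equivalent :: "('g, 'b) monoid_scheme \<Rightarrow> 'g set \<Rightarrow> ('g \<Rightarrow> 'g \<Rightarrow> 'k::field) \<Rightarrow> ('g \<Rightarrow> 'g \<Rightarrow> 'k) \<Rightarrow> bool" where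
  "twist_equivalent G X q q' =
     (\<exists>\<sigma>. group_2cocycle G \<sigma> \<and>
        (\<forall>x\<in>X. \<forall>y\<in>X. q' x y = \<sigma> x y * q x y * inverse (\<sigma> (rtri G x y) x)))"

text \<open>Tensors of degree n in (kX)^{\<otimes> n} are represented as functions on words (lists) over X,
  supported on words of length n; the basis vector v_{x_1} \<otimes> ... \<otimes> v_{x_n} is the indicator of
  the word [x_1,...,x_n].\<close>
definition words :: "'g set \<Rightarrow> nat \<Rightarrow> 'g list set" where
  "words X n = {w. length w = n \<and> set w \<subseteq> X}"

definition tensor_space :: "'g set \<Rightarrow> nat \<Rightarrow> ('g list \<Rightarrow> 'k::field) set" where
  "tensor_space X n = {f. \<forall>w. f w \<noteq> 0 \<longrightarrow> w \<in> words X n}"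

definition basis_vec :: "'g list \<Rightarrow> 'g list \<Rightarrow> 'k::field" where
  "basis_vec u = (\<lambda>w. if w = u then 1 else 0)"

definition tens :: "nat \<Rightarrow> ('g list \<Rightarrow> 'k::field) \<Rightarrow> ('g list \<Rightarrow> 'k) \<Rightarrow> 'g list \<Rightarrow> 'k" where
  "tens a f g = (\<lambda>w. f (take a w) * g (drop a w))"

text \<open>c_q(v_x \<otimes> v_y) = q(x,y) v_{x\<triangleright>y} \<otimes> v_x, acting at (0-based) positions i, i+1.\<close>
definition bstep :: "('g \<Rightarrow> 'g \<Rightarrow> 'g) \<Rightarrow> nat \<Rightarrow> 'g list \<Rightarrow> 'g list" where
  "bstep tri i w = w[i := tri (w ! i) (w ! Suc i), Suc i := w ! i]"

definition braid_gen_op ::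
  "('g \<Rightarrow> 'g \<Rightarrow> 'g) \<Rightarrow> 'g set \<Rightarrow> ('g \<Rightarrow> 'g \<Rightarrow> 'k::field) \<Rightarrow> nat \<Rightarrow> nat
     \<Rightarrow> ('g list \<Rightarrow> 'k) \<Rightarrow> ('g list \<Rightarrow> 'k)" where
  "braid_gen_op tri X q n i f =
     (\<lambda>u. \<Sum>w\<in>{w \<in> words X n. bstep tri i w = u}. q (w ! i) (w ! Suc i) * f w)"

text \<open>Symmetric group S_n as permutations of {0..<n}; simple transposition s_i swaps i and i+1
  (0-based, i+1 < n).\<close>
definition sn_word_prod :: "nat list \<Rightarrow> nat \<Rightarrow> nat" where
  "sn_word_prod is = foldr (\<lambda>i p. transpose i (Suc i) \<circ> p) is id"

definition reduced_word :: "nat \<Rightarrow> (nat \<Rightarrow> nat) \<Rightarrow> nat list \<Rightarrow> bool" where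
  "reduced_word n p is =
     (set is \<subseteq> {i. Suc i < n} \<and> sn_word_prod is = p \<and>
      (\<forall>js. set js \<subseteq> {i. Suc i < n} \<and> sn_word_prod js = p \<longrightarrow> length is \<le> length js))"

text \<open>rho_n(M_n(w)) for the Matsumoto section, using a (chosen) reduced expression.\<close>
definition matsumoto_op ::
  "('g \<Rightarrow> 'g \<Rightarrow> 'g) \<Rightarrow> 'g set \<Rightarrow> ('g \<Rightarrow> 'g \<Rightarrow> 'k::field) \<Rightarrow> nat \<Rightarrow> (nat \<Rightarrow> nat)
     \<Rightarrow> ('g list \<Rightarrow> 'k) \<Rightarrow> ('g list \<Rightarrow> 'k)" where
  "matsumoto_op tri X q n p = foldr (braid_gen_op tri X q n) (SOME is. reduced_word n p is)"

definition quantum_symmetrizer ::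
  "('g \<Rightarrow> 'g \<Rightarrow> 'g) \<Rightarrow> 'g set \<Rightarrow> ('g \<Rightarrow> 'g \<Rightarrow> 'k::field) \<Rightarrow> nat
     \<Rightarrow> ('g list \<Rightarrow> 'k) \<Rightarrow> ('g list \<Rightarrow> 'k)" where
  "quantum_symmetrizer tri X q n f =
     (\<lambda>u. \<Sum>p\<in>{p. p permutes {..<n}}. matsumoto_op tri X q n p f u)"

definition ker_Q :: "('g \<Rightarrow> 'g \<Rightarrow> 'g) \<Rightarrow> 'g set \<Rightarrow> ('g \<Rightarrow> 'g \<Rightarrow> 'k::field) \<Rightarrow> nat \<Rightarrow> ('g list \<Rightarrow> 'k) set" where
  "ker_Q tri X q n = {f \<in> tensor_space X n. quantum_symmetrizer tri X q n f = (\<lambda>_. 0)}"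

text \<open>Degree n component of the defining ideal J of the Nichols algebra: ker Q_n for n \<ge> 2.\<close>
definition nichols_ideal_deg :: "('g \<Rightarrow> 'g \<Rightarrow> 'g) \<Rightarrow> 'g set \<Rightarrow> ('g \<Rightarrow> 'g \<Rightarrow> 'k::field) \<Rightarrow> nat \<Rightarrow> ('g list \<Rightarrow> 'k) set" where
  "nichols_ideal_deg tri X q n = (if 2 \<le> n then ker_Q tri X q n else {\<lambda>_. 0})"

text \<open>Degree n component of the two-sided ideal of T(V) generated by the ker Q_m, 2 \<le> m \<le> d.\<close>
definition dcover_ideal_deg ::
  "('g \<Rightarrow> 'g \<Rightarrow> 'g) \<Rightarrow> 'g set \<Rightarrow> ('g \<Rightarrow> 'g \<Rightarrow> 'k::field) \<Rightarrow> nat \<Rightarrow> nat \<Rightarrow> ('g list \<Rightarrow> 'k) set" where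
  "dcover_ideal_deg tri X q d n =
     Modules.module.span (\<lambda>(c::'k) f w. c * f w)
       {tens (length u) (basis_vec u) (tens m k (basis_vec v)) | u v m k.
          set u \<subseteq> X \<and> set v \<subseteq> X \<and> 2 \<le> m \<and> m \<le> d \<and> k \<in> ker_Q tri X q m \<and>
          length u + m + length v = n}"

text \<open>The natural projection from the d-atic cover onto the Nichols algebra is an isomorphism
  iff the two graded ideals coincide.\<close>
definition nichols_eq_dcover :: "('g \<Rightarrow> 'g \<Rightarrow> 'g) \<Rightarrow> 'g set \<Rightarrow> ('g \<Rightarrow> 'g \<Rightarrow> 'k::field) \<Rightarrow> nat \<Rightarrow> bool" where
  "nichols_eq_dcover tri X q d = (\<forall>n. dcover_ideal_deg tri X q d n = nichols_ideal_deg tri X q n)"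

end

theory Submission imports Defs begin

definition gdeg :: "('g, 'b) monoid_scheme \<Rightarrow> 'g list \<Rightarrow> 'g" where
  "gdeg G w = foldl (\<lambda>a x. a \<otimes>\<^bsub>G\<^esub> x) \<one>\<^bsub>G\<^esub> w"

fun phiacc :: "('g, 'b) monoid_scheme \<Rightarrow> ('g \<Rightarrow> 'g \<Rightarrow> 'k::field) \<Rightarrow> 'g \<Rightarrow> 'g list \<Rightarrow> 'k" where
  "phiacc G t p [] = 1"
| "phiacc G t p (x # w) = t p x * phiacc G t (p \<otimes>\<^bsub>G\<^esub> x) w"

lemma phiacc_append: "phiacc G t p (u @ z) = phiacc G t p u * phiacc G t (foldl (\<lambda>a x. a \<otimes>\<^bsub>G\<^esub> x) p u) z"
  by (induction u arbitrary: p) auto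

context group begin

lemma foldl_closed: "p \<in> carrier G \<Longrightarrow> set u \<subseteq> carrier G \<Longrightarrow> foldl (\<lambda>a x. a \<otimes> x) p u \<in> carrier G"
  by (induction u arbitrary: p) auto

lemma foldl_assoc: "p \<in> carrier G \<Longrightarrow> set u \<subseteq> carrier G \<Longrightarrow> foldl (\<lambda>a x. a \<otimes> x) p u = p \<otimes> foldl (\<lambda>a x. a \<otimes> x) \<one> u"
proof (induction u arbitrary: p)
  case Nil then show ?case by simp
next
  case (Cons x u)
  have xc: "x \<in> carrier G" "set u \<subseteq> carrier G" using Cons.prems by auto
  have c: "foldl (\<lambda>a x. a \<otimes> x) \<one> u \<in> carrier G" using xc by (intro foldl_closed) auto
  have "foldl (\<lambda>a x. a \<otimes> x) p (x # u) = foldl (\<lambda>a x. a \<otimes> x) (p \<otimes> x) u" by simp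
  also have "\<dots> = (p \<otimes> x) \<otimes> foldl (\<lambda>a x. a \<otimes> x) \<one> u"
    by (rule Cons.IH) (use Cons.prems xc in auto)
  also have "\<dots> = p \<otimes> (x \<otimes> foldl (\<lambda>a x. a \<otimes> x) \<one> u)" using Cons.prems xc c by (simp add: m_assoc)
  also have "x \<otimes> foldl (\<lambda>a x. a \<otimes> x) \<one> u = foldl (\<lambda>a x. a \<otimes> x) x u"
    by (rule Cons.IH[symmetric]) (use xc in auto)
  also have "\<dots> = foldl (\<lambda>a x. a \<otimes> x) \<one> (x # u)" using xc by simp
  finally show ?case .
qed

lemma phiacc_shift:
  assumes "group_2cocycle G t" "p \<in> carrier G" "set z \<subseteq> carrier G"
  shows "phiacc G t p z = t p (gdeg G z) * phiacc G t \<one> z"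
  using assms(2,3)
proof (induction z arbitrary: p)
  case Nil then show ?case using assms(1) by (simp add: group_2cocycle_def gdeg_def)
next
  case (Cons x z)
  have xc: "x \<in> carrier G" "set z \<subseteq> carrier G" using Cons by auto
  have rz: "gdeg G z \<in> carrier G" unfolding gdeg_def using xc by (intro foldl_closed) auto
  have g1: "gdeg G (x # z) = x \<otimes> gdeg G z"
    unfolding gdeg_def using foldl_assoc[of x z] xc by simp
  have px: "p \<otimes> x \<in> carrier G" using Cons xc by simp
  have coc: "t p x * t (p \<otimes> x) (gdeg G z) = t x (gdeg G z) * t p (x \<otimes> gdeg G z)"
    using assms(1) Cons(2) xc rz unfolding group_2cocycle_def by blast
  have t1: "t \<one> x = 1" using assms(1) xc unfolding group_2cocycle_def by blast
  have "phiacc G t p (x # z) = t p x * (t (p \<otimes> x) (gdeg G z) * phiacc G t \<one> z)"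
    using Cons.IH[OF px xc(2)] by simp
  also have "\<dots> = (t p x * t (p \<otimes> x) (gdeg G z)) * phiacc G t \<one> z" by (simp only: mult.assoc)
  also have "\<dots> = (t x (gdeg G z) * t p (x \<otimes> gdeg G z)) * phiacc G t \<one> z" by (simp only: coc)
  also have "\<dots> = t p (gdeg G (x#z)) * (t x (gdeg G z) * phiacc G t \<one> z)" by (simp only: g1 ac_simps)
  also have "\<dots> = t p (gdeg G (x#z)) * phiacc G t \<one> (x # z)"
    using Cons.IH[OF xc(1) xc(2)] xc t1 by simp
  finally show ?case .
qed


lemma rtri_closed:
  assumes "conj_class G X" "x \<in> X" "y \<in> X" "X \<subseteq> carrier G"
  shows "rtri G x y \<in> X"
proof -
  obtain a where a: "a \<in> carrier G" "X = {g \<otimes> a \<otimes> inv g | g. g \<in> carrier G}"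
    using assms(1) unfolding conj_class_def by blast
  obtain g where g: "g \<in> carrier G" "y = g \<otimes> a \<otimes> inv g" using assms(3) a by blast
  have xc: "x \<in> carrier G" using assms by auto
  have "rtri G x y = (x \<otimes> g) \<otimes> a \<otimes> inv (x \<otimes> g)"
    unfolding rtri_def g(2) using g xc a by (simp add: m_assoc inv_mult_group)
  then show ?thesis using a g xc by auto
qed

lemma rtri_cancel: "a \<in> carrier G \<Longrightarrow> b \<in> carrier G \<Longrightarrow> r \<in> carrier G \<Longrightarrow>
   r \<otimes> rtri G a b \<otimes> a = r \<otimes> a \<otimes> b"
  unfolding rtri_def by (simp add: m_assoc)

lemma rtri_carrier: "a \<in> carrier G \<Longrightarrow> b \<in> carrier G \<Longrightarrow> rtri G a b \<in> carrier G"
  unfolding rtri_def by simp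

end

lemma w_split: "Suc i < length w \<Longrightarrow>
  w = take i w @ [w!i, w!Suc i] @ drop (Suc (Suc i)) w"
  by (metis Cons_nth_drop_Suc Suc_lessD append_Cons append_Nil append_take_drop_id)
lemma upd2: "length u = i \<Longrightarrow> (u @ a # b # v)[i := c, Suc i := d] = u @ c # d # v"
  by (simp add: list_update_append)
lemma bstep_split: "Suc i < length w \<Longrightarrow>
  bstep tri i w = take i w @ [tri (w!i) (w!Suc i), w!i] @ drop (Suc (Suc i)) w"
proof -
  assume a: "Suc i < length w"
  define u where "u = take i w"
  have lu: "length u = i" using a unfolding u_def by simp
  have w: "w = u @ w!i # w!Suc i # drop (Suc (Suc i)) w" using w_split[OF a] unfolding u_def by simp
  have "bstep tri i w = (u @ w!i # w!Suc i # drop (Suc (Suc i)) w)[i := tri (w!i) (w!Suc i), Suc i := w!i]"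
    unfolding bstep_def by (subst w) (rule refl)
  then show ?thesis using upd2[OF lu] unfolding u_def by simp
qed

lemma fmod: "module (\<lambda>(c::'k::field) (f::'a \<Rightarrow> 'k) w. c * f w)"
  by unfold_locales (auto simp: fun_eq_iff algebra_simps)

lemma sum_fun_apply: "(sum f A) w = (\<Sum>a\<in>A. f a w)"
  by (induction A rule: infinite_finite_induct) auto

lemma sn_word_prod_append: "sn_word_prod (xs @ ys) = sn_word_prod xs \<circ> sn_word_prod ys"
  unfolding sn_word_prod_def by (induction xs) auto

lemma transp_word:
  assumes "a < b" "b < n"
  shows "\<exists>is. set is \<subseteq> {i. Suc i < n} \<and> sn_word_prod is = transpose a b"
  using assms
proof (induction b)
  case 0 then show ?case by simp
next
  case (Suc b)
  show ?case
  proof (cases "a = b")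
    case True
    then show ?thesis using Suc by (intro exI[of _ "[b]"]) (simp add: sn_word_prod_def)
  next
    case False
    then obtain js where js: "set js \<subseteq> {i. Suc i < n}" "sn_word_prod js = transpose a b"
      using Suc by auto
    have e: "transpose a (Suc b) = transpose b (Suc b) \<circ> transpose a b \<circ> transpose b (Suc b)"
      using False Suc by (auto simp: fun_eq_iff transpose_def)
    have s1: "sn_word_prod [b] = transpose b (Suc b)" by (simp add: sn_word_prod_def)
    have "sn_word_prod ([b] @ js @ [b]) = transpose a (Suc b)"
      by (simp only: sn_word_prod_append js(2) s1 e o_assoc)
    then show ?thesis using js Suc
      by (intro exI[of _ "[b] @ js @ [b]"]) auto
  qed
qed

lemma perm_word:
  assumes "p permutes {..<n}"
  shows "\<exists>is. set is \<subseteq> {i. Suc i < n} \<and> sn_word_prod is = p"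
  using assms finite_lessThan
proof (induction rule: permutes_induct)
  case id then show ?case by (intro exI[of _ "[]"]) (simp add: sn_word_prod_def)
next
  case (swap a b p)
  then obtain js where js: "set js \<subseteq> {i. Suc i < n}" "sn_word_prod js = p" by auto
  obtain ks where ks: "set ks \<subseteq> {i. Suc i < n}" "sn_word_prod ks = transpose a b"
  proof (cases "a < b")
    case True then show ?thesis using that transp_word[of a b n] swap by auto
  next
    case False then have "b < a" using swap by auto
    then show ?thesis using that transp_word[of b a n] swap by (auto simp: transpose_commute)
  qed
  show ?case using js ks by (intro exI[of _ "ks @ js"]) (simp add: sn_word_prod_append)
qed

lemma reduced_exists:
  assumes "p permutes {..<n}"
  shows "set (SOME is. reduced_word n p is) \<subseteq> {i. Suc i < n}"
proof -
  obtain js where "set js \<subseteq> {i. Suc i < n} \<and> sn_word_prod js = p" using perm_word[OF assms] by auto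
  from ex_has_least_nat[of "\<lambda>y. set y \<subseteq> {i. Suc i < n} \<and> sn_word_prod y = p" js length, OF this]
  obtain xs where "(set xs \<subseteq> {i. Suc i < n} \<and> sn_word_prod xs = p) \<and>
     (\<forall>y. (set y \<subseteq> {i. Suc i < n} \<and> sn_word_prod y = p) \<longrightarrow> length xs \<le> length y)"
    by blast
  then have "reduced_word n p xs" unfolding reduced_word_def by blast
  then have "reduced_word n p (SOME is. reduced_word n p is)" by (rule someI)
  then show ?thesis unfolding reduced_word_def by blast
qed


locale twist_setup = group G for G :: "('g, 'b) monoid_scheme" +
  fixes X :: "'g set" and q q' t :: "'g \<Rightarrow> 'g \<Rightarrow> 'k::field"
  assumes fincar: "finite (carrier G)" and Xc: "X \<subseteq> carrier G"
    and cc: "conj_class G X" and coc: "group_2cocycle G t"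
    and rel: "\<forall>x\<in>X. \<forall>y\<in>X. q' x y * t x y = t (rtri G x y) x * q x y"
begin

definition phi :: "'g list \<Rightarrow> 'k" where "phi w = phiacc G t \<one>\<^bsub>G\<^esub> w"
definition Phi :: "('g list \<Rightarrow> 'k) \<Rightarrow> 'g list \<Rightarrow> 'k" where "Phi f = (\<lambda>w. phi w * f w)"

lemma tnz: "x \<in> carrier G \<Longrightarrow> y \<in> carrier G \<Longrightarrow> t x y \<noteq> 0"
  using coc unfolding group_2cocycle_def by blast

lemma tcoc: "x \<in> carrier G \<Longrightarrow> y \<in> carrier G \<Longrightarrow> z \<in> carrier G \<Longrightarrow>
  t x y * t (x \<otimes>\<^bsub>G\<^esub> y) z = t y z * t x (y \<otimes>\<^bsub>G\<^esub> z)"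
  using coc unfolding group_2cocycle_def by blast

lemma words_carrier: "w \<in> words X n \<Longrightarrow> set w \<subseteq> carrier G"
  using Xc unfolding words_def by auto

lemma bstep_words:
  assumes "w \<in> words X n" "Suc i < n"
  shows "bstep (rtri G) i w \<in> words X n"
proof -
  have l: "length w = n" "set w \<subseteq> X" using assms unfolding words_def by auto
  have "w ! i \<in> X" "w ! Suc i \<in> X" using l assms by (auto dest: nth_mem)
  then have "rtri G (w!i) (w!Suc i) \<in> X" using rtri_closed[OF cc _ _ Xc] by blast
  then have s: "set (bstep (rtri G) i w) \<subseteq> X"
    unfolding bstep_def using l(2) \<open>w ! i \<in> X\<close>
      set_update_subset_insert[of "w[i := rtri G (w!i) (w!Suc i)]" "Suc i" "w!i"]
      set_update_subset_insert[of w i "rtri G (w!i) (w!Suc i)"] by blast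
  have "length (bstep (rtri G) i w) = n" unfolding bstep_def using l(1) by simp
  then show ?thesis using s unfolding words_def by simp
qed


lemma split_data:
  assumes "w \<in> words X n" "Suc i < n"
  defines "a \<equiv> w ! i" and "b \<equiv> w ! Suc i" and "u \<equiv> take i w" and "v \<equiv> drop (Suc (Suc i)) w"
  shows "w = u @ [a, b] @ v" "bstep (rtri G) i w = u @ [rtri G a b, a] @ v"
    "a \<in> carrier G" "b \<in> carrier G" "set u \<subseteq> carrier G" "set v \<subseteq> carrier G"
proof -
  have l: "length w = n" using assms unfolding words_def by auto
  show w: "w = u @ [a, b] @ v" unfolding u_def v_def a_def b_def using l assms(2) w_split[of i w] by simp
  show "bstep (rtri G) i w = u @ [rtri G a b, a] @ v"
    unfolding u_def v_def a_def b_def using l assms(2) bstep_split[of i w "rtri G"] by simp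
  have "set w \<subseteq> carrier G" using words_carrier assms by blast
  then show "a \<in> carrier G" "b \<in> carrier G" "set u \<subseteq> carrier G" "set v \<subseteq> carrier G"
    using w by auto
qed

lemma gdeg_append: "gdeg G (u @ z) = foldl (\<lambda>a x. a \<otimes>\<^bsub>G\<^esub> x) (gdeg G u) z"
  unfolding gdeg_def by simp

lemma gdeg_carrier: "set w \<subseteq> carrier G \<Longrightarrow> gdeg G w \<in> carrier G"
  unfolding gdeg_def by (intro foldl_closed) auto

lemma gdeg_bstep:
  assumes "w \<in> words X n" "Suc i < n"
  shows "gdeg G (bstep (rtri G) i w) = gdeg G w"
proof -
  note sd = split_data[OF assms]
  let ?a = "w ! i" and ?b = "w ! Suc i" and ?u = "take i w" and ?v = "drop (Suc (Suc i)) w"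
  have r: "gdeg G ?u \<in> carrier G" using gdeg_carrier sd by blast
  have "gdeg G ?u \<otimes>\<^bsub>G\<^esub> rtri G ?a ?b \<otimes>\<^bsub>G\<^esub> ?a = gdeg G ?u \<otimes>\<^bsub>G\<^esub> ?a \<otimes>\<^bsub>G\<^esub> ?b"
    using rtri_cancel sd r by blast
  moreover have "gdeg G (bstep (rtri G) i w) = foldl (\<lambda>a x. a \<otimes>\<^bsub>G\<^esub> x) (gdeg G ?u \<otimes>\<^bsub>G\<^esub> rtri G ?a ?b \<otimes>\<^bsub>G\<^esub> ?a) ?v"
    by (subst sd(2)) (simp add: gdeg_append)
  moreover have "gdeg G w = foldl (\<lambda>a x. a \<otimes>\<^bsub>G\<^esub> x) (gdeg G ?u \<otimes>\<^bsub>G\<^esub> ?a \<otimes>\<^bsub>G\<^esub> ?b) ?v"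
    by (subst sd(1)) (simp add: gdeg_append)
  ultimately show ?thesis by simp
qed

lemma phi_swap:
  assumes "w \<in> words X n" "Suc i < n"
  shows "phi (bstep (rtri G) i w) * t (w!i) (w!Suc i) = t (rtri G (w!i) (w!Suc i)) (w!i) * phi w"
proof -
  note sd = split_data[OF assms]
  define a where "a = w ! i"
  define b where "b = w ! Suc i"
  define u where "u = take i w"
  define v where "v = drop (Suc (Suc i)) w"
  define c where "c = rtri G a b"
  define r where "r = gdeg G u"
  have ac: "a \<in> carrier G" "b \<in> carrier G" and rc: "r \<in> carrier G"
    using sd(3-4) gdeg_carrier[OF sd(5)] unfolding a_def b_def r_def u_def by auto
  have cc': "c \<in> carrier G" unfolding c_def using rtri_carrier[OF ac] .
  have ca: "c \<otimes>\<^bsub>G\<^esub> a = a \<otimes>\<^bsub>G\<^esub> b"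
    using rtri_cancel[OF ac, of "\<one>\<^bsub>G\<^esub>"] ac cc' unfolding c_def by simp
  have rca: "r \<otimes>\<^bsub>G\<^esub> c \<otimes>\<^bsub>G\<^esub> a = r \<otimes>\<^bsub>G\<^esub> a \<otimes>\<^bsub>G\<^esub> b"
    using rtri_cancel[OF ac rc] unfolding c_def .
  have ab: "a \<otimes>\<^bsub>G\<^esub> b \<in> carrier G" using ac by simp
  have w1: "w = u @ [a,b] @ v" using sd(1) unfolding a_def b_def u_def v_def .
  have w2: "bstep (rtri G) i w = u @ [c,a] @ v" using sd(2) unfolding a_def b_def u_def v_def c_def .
  have e1: "phi w = phiacc G t \<one>\<^bsub>G\<^esub> u * (t r a * (t (r \<otimes>\<^bsub>G\<^esub> a) b * phiacc G t (r \<otimes>\<^bsub>G\<^esub> a \<otimes>\<^bsub>G\<^esub> b) v))"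
    unfolding phi_def r_def gdeg_def by (subst w1) (simp add: phiacc_append)
  have e2: "phi (bstep (rtri G) i w) = phiacc G t \<one>\<^bsub>G\<^esub> u * (t r c * (t (r \<otimes>\<^bsub>G\<^esub> c) a * phiacc G t (r \<otimes>\<^bsub>G\<^esub> a \<otimes>\<^bsub>G\<^esub> b) v))"
    unfolding phi_def w2 using rca unfolding r_def gdeg_def by (simp add: phiacc_append)
  have k1: "t r a * t (r \<otimes>\<^bsub>G\<^esub> a) b = t a b * t r (a \<otimes>\<^bsub>G\<^esub> b)" using tcoc ac rc by blast
  have k2: "t r c * t (r \<otimes>\<^bsub>G\<^esub> c) a = t c a * t r (a \<otimes>\<^bsub>G\<^esub> b)" using tcoc[OF rc cc' ac(1)] ca by simp
  have "phi (bstep (rtri G) i w) * t a b = phiacc G t \<one>\<^bsub>G\<^esub> u * ((t r c * t (r \<otimes>\<^bsub>G\<^esub> c) a) * t a b * phiacc G t (r \<otimes>\<^bsub>G\<^esub> a \<otimes>\<^bsub>G\<^esub> b) v)"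
    unfolding e2 by (simp add: ac_simps)
  also have "\<dots> = t c a * (phiacc G t \<one>\<^bsub>G\<^esub> u * ((t r a * t (r \<otimes>\<^bsub>G\<^esub> a) b) * phiacc G t (r \<otimes>\<^bsub>G\<^esub> a \<otimes>\<^bsub>G\<^esub> b) v))"
    unfolding k1 k2 by (simp add: ac_simps)
  also have "\<dots> = t c a * phi w" unfolding e1 by (simp add: ac_simps)
  finally show ?thesis unfolding a_def b_def c_def .
qed


lemma phi_step:
  assumes "w \<in> words X n" "Suc i < n"
  shows "phi (bstep (rtri G) i w) * q (w!i) (w!Suc i) = q' (w!i) (w!Suc i) * phi w"
proof -
  define a where "a = w ! i"
  define b where "b = w ! Suc i"
  have l: "length w = n" "set w \<subseteq> X" using assms unfolding words_def by auto
  have ab: "a \<in> X" "b \<in> X" using l assms unfolding a_def b_def by (auto dest: nth_mem)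
  have abc: "a \<in> carrier G" "b \<in> carrier G" using ab Xc by auto
  have tz: "t a b \<noteq> 0" using tnz abc by blast
  have sw: "phi (bstep (rtri G) i w) * t a b = t (rtri G a b) a * phi w"
    using phi_swap[OF assms] unfolding a_def b_def .
  have rl: "q' a b * t a b = t (rtri G a b) a * q a b" using rel ab by blast
  have "(phi (bstep (rtri G) i w) * q a b) * t a b = (phi (bstep (rtri G) i w) * t a b) * q a b"
    by (simp only: ac_simps)
  also have "\<dots> = phi w * (t (rtri G a b) a * q a b)" unfolding sw by (simp only: ac_simps)
  also have "\<dots> = (q' a b * phi w) * t a b" unfolding rl[symmetric] by (simp only: ac_simps)
  finally have "phi (bstep (rtri G) i w) * q a b = q' a b * phi w" using tz by simp
  then show ?thesis unfolding a_def b_def .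
qed

lemma braid_comm:
  assumes "Suc i < n"
  shows "braid_gen_op (rtri G) X q' n i (Phi f) = Phi (braid_gen_op (rtri G) X q n i f)"
proof
  fix u
  have "braid_gen_op (rtri G) X q' n i (Phi f) u =
     (\<Sum>w\<in>{w \<in> words X n. bstep (rtri G) i w = u}. q' (w ! i) (w ! Suc i) * (phi w * f w))"
    unfolding braid_gen_op_def Phi_def ..
  also have "\<dots> = (\<Sum>w\<in>{w \<in> words X n. bstep (rtri G) i w = u}. phi u * (q (w ! i) (w ! Suc i) * f w))"
  proof (rule sum.cong[OF refl])
    fix w assume "w \<in> {w \<in> words X n. bstep (rtri G) i w = u}"
    then have w: "w \<in> words X n" "bstep (rtri G) i w = u" by auto
    have "q' (w ! i) (w ! Suc i) * (phi w * f w) = (q' (w ! i) (w ! Suc i) * phi w) * f w"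
      by (simp only: ac_simps)
    also have "\<dots> = (phi u * q (w ! i) (w ! Suc i)) * f w"
      using phi_step[OF w(1) assms] w(2) by simp
    finally show "q' (w ! i) (w ! Suc i) * (phi w * f w) = phi u * (q (w ! i) (w ! Suc i) * f w)"
      by (simp only: ac_simps)
  qed
  also have "\<dots> = Phi (braid_gen_op (rtri G) X q n i f) u"
    unfolding braid_gen_op_def Phi_def by (simp only: sum_distrib_left)
  finally show "braid_gen_op (rtri G) X q' n i (Phi f) u = Phi (braid_gen_op (rtri G) X q n i f) u" .
qed

lemma mats_comm:
  "set xs \<subseteq> {i. Suc i < n} \<Longrightarrow>
   foldr (braid_gen_op (rtri G) X q' n) xs (Phi f) = Phi (foldr (braid_gen_op (rtri G) X q n) xs f)"
proof (induction xs)
  case Nil then show ?case by simp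
next
  case (Cons x xs)
  then have "Suc x < n" "set xs \<subseteq> {i. Suc i < n}" by auto
  then show ?case using Cons.IH braid_comm by simp
qed

lemma Q_comm:
  "quantum_symmetrizer (rtri G) X q' n (Phi f) = Phi (quantum_symmetrizer (rtri G) X q n f)"
proof
  fix u
  have "quantum_symmetrizer (rtri G) X q' n (Phi f) u =
    (\<Sum>p\<in>{p. p permutes {..<n}}. Phi (matsumoto_op (rtri G) X q n p f) u)"
    unfolding quantum_symmetrizer_def
  proof (rule sum.cong[OF refl])
    fix p assume "p \<in> {p. p permutes {..<n}}"
    then have "set (SOME is. reduced_word n p is) \<subseteq> {i. Suc i < n}" using reduced_exists by auto
    then show "matsumoto_op (rtri G) X q' n p (Phi f) u = Phi (matsumoto_op (rtri G) X q n p f) u"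
      unfolding matsumoto_op_def using mats_comm by metis
  qed
  also have "\<dots> = Phi (quantum_symmetrizer (rtri G) X q n f) u"
    unfolding quantum_symmetrizer_def Phi_def by (simp only: sum_distrib_left)
  finally show "quantum_symmetrizer (rtri G) X q' n (Phi f) u = Phi (quantum_symmetrizer (rtri G) X q n f) u" .
qed

lemma ker_map: "f \<in> ker_Q (rtri G) X q m \<Longrightarrow> Phi f \<in> ker_Q (rtri G) X q' m"
  unfolding ker_Q_def tensor_space_def using Q_comm[of m f] by (auto simp: Phi_def fun_eq_iff)


definition res :: "'g \<Rightarrow> ('g list \<Rightarrow> 'k) \<Rightarrow> 'g list \<Rightarrow> 'k" where
  "res h f = (\<lambda>w. if gdeg G w = h then f w else 0)"

lemma braid_res:
  assumes "Suc i < n"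
  shows "braid_gen_op (rtri G) X qq n i (res h f) = res h (braid_gen_op (rtri G) X qq n i f)"
proof
  fix u
  show "braid_gen_op (rtri G) X qq n i (res h f) u = res h (braid_gen_op (rtri G) X qq n i f) u"
  proof (cases "gdeg G u = h")
    case True
    show ?thesis unfolding braid_gen_op_def res_def using True
      by (auto intro!: sum.cong simp: gdeg_bstep[OF _ assms])
  next
    case False
    show ?thesis unfolding braid_gen_op_def res_def using False
      by (auto intro!: sum.neutral simp: gdeg_bstep[OF _ assms])
  qed
qed

lemma mats_res:
  "set xs \<subseteq> {i. Suc i < n} \<Longrightarrow>
   foldr (braid_gen_op (rtri G) X qq n) xs (res h f) = res h (foldr (braid_gen_op (rtri G) X qq n) xs f)"
proof (induction xs)
  case Nil then show ?case by simp
next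
  case (Cons x xs)
  then have "Suc x < n" "set xs \<subseteq> {i. Suc i < n}" by auto
  then show ?case using Cons.IH braid_res by simp
qed

lemma Q_res:
  "quantum_symmetrizer (rtri G) X qq n (res h f) = res h (quantum_symmetrizer (rtri G) X qq n f)"
proof
  fix u
  have "quantum_symmetrizer (rtri G) X qq n (res h f) u =
    (\<Sum>p\<in>{p. p permutes {..<n}}. res h (matsumoto_op (rtri G) X qq n p f) u)"
    unfolding quantum_symmetrizer_def
  proof (rule sum.cong[OF refl])
    fix p assume "p \<in> {p. p permutes {..<n}}"
    then have "set (SOME is. reduced_word n p is) \<subseteq> {i. Suc i < n}" using reduced_exists by auto
    then show "matsumoto_op (rtri G) X qq n p (res h f) u = res h (matsumoto_op (rtri G) X qq n p f) u"
      unfolding matsumoto_op_def using mats_res by metis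
  qed
  also have "\<dots> = res h (quantum_symmetrizer (rtri G) X qq n f) u"
    unfolding quantum_symmetrizer_def res_def by simp
  finally show "quantum_symmetrizer (rtri G) X qq n (res h f) u = res h (quantum_symmetrizer (rtri G) X qq n f) u" .
qed

lemma ker_res: "k \<in> ker_Q (rtri G) X qq m \<Longrightarrow> res h k \<in> ker_Q (rtri G) X qq m"
  unfolding ker_Q_def tensor_space_def using Q_res[of qq m h k] by (auto simp: res_def fun_eq_iff)

lemma phi_concat:
  assumes "set u \<subseteq> carrier G" "set z \<subseteq> carrier G"
  shows "phi (u @ z @ v) = phiacc G t \<one>\<^bsub>G\<^esub> u * t (gdeg G u) (gdeg G z) * phi z *
           phiacc G t (gdeg G u \<otimes>\<^bsub>G\<^esub> gdeg G z) v"
proof -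
  have gu: "gdeg G u \<in> carrier G" using gdeg_carrier assms by blast
  have f: "foldl (\<lambda>a x. a \<otimes>\<^bsub>G\<^esub> x) (gdeg G u) z = gdeg G u \<otimes>\<^bsub>G\<^esub> gdeg G z"
    unfolding gdeg_def[of G z] using foldl_assoc[OF gu assms(2)] .
  have "phi (u @ z @ v) = phiacc G t \<one>\<^bsub>G\<^esub> u * (phiacc G t (gdeg G u) z *
           phiacc G t (foldl (\<lambda>a x. a \<otimes>\<^bsub>G\<^esub> x) (gdeg G u) z) v)"
    unfolding phi_def gdeg_def by (simp only: phiacc_append)
  also have "\<dots> = phiacc G t \<one>\<^bsub>G\<^esub> u * (t (gdeg G u) (gdeg G z) * phi z *
           phiacc G t (gdeg G u \<otimes>\<^bsub>G\<^esub> gdeg G z) v)"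
    unfolding f phi_def phiacc_shift[OF coc gu assms(2)] ..
  finally show ?thesis by (simp only: ac_simps)
qed

lemma gen_apply:
  "tens (length u) (basis_vec u) (tens m k (basis_vec v)) w =
   (if take (length u) w = u \<and> drop m (drop (length u) w) = v then k (take m (drop (length u) w)) else 0)"
  by (simp add: tens_def basis_vec_def)

definition cf :: "'g list \<Rightarrow> 'g list \<Rightarrow> 'g \<Rightarrow> 'k" where
  "cf u v h = phiacc G t \<one>\<^bsub>G\<^esub> u * t (gdeg G u) h * phiacc G t (gdeg G u \<otimes>\<^bsub>G\<^esub> h) v"

lemma gen_decomp:
  assumes "set u \<subseteq> X" "k \<in> tensor_space X m"
  shows "Phi (tens (length u) (basis_vec u) (tens m k (basis_vec v))) w =
    (\<Sum>h\<in>carrier G. cf u v h * tens (length u) (basis_vec u) (tens m (Phi (res h k)) (basis_vec v)) w)"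
proof (cases "take (length u) w = u \<and> drop m (drop (length u) w) = v \<and> k (take m (drop (length u) w)) \<noteq> 0")
  case False
  then show ?thesis unfolding gen_apply Phi_def res_def by (auto intro!: sum.neutral)
next
  case True
  define z where "z = take m (drop (length u) w)"
  have zw: "z \<in> words X m" using True assms(2) unfolding tensor_space_def z_def by auto
  have zc: "set z \<subseteq> carrier G" using words_carrier zw by blast
  have uc: "set u \<subseteq> carrier G" using assms(1) Xc by auto
  have wz: "w = u @ z @ v"
  proof -
    have "w = take (length u) w @ drop (length u) w" by simp
    also have "drop (length u) w = z @ drop m (drop (length u) w)" unfolding z_def by (rule append_take_drop_id[symmetric])
    finally show ?thesis using True by simp
  qed
  have lhs: "Phi (tens (length u) (basis_vec u) (tens m k (basis_vec v))) w = phi w * k z"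
    unfolding gen_apply Phi_def using True z_def by simp
  have "(\<Sum>h\<in>carrier G. cf u v h * tens (length u) (basis_vec u) (tens m (Phi (res h k)) (basis_vec v)) w)
     = (\<Sum>h\<in>carrier G. if h = gdeg G z then cf u v h * (phi z * k z) else 0)"
    unfolding gen_apply Phi_def res_def using True z_def by (intro sum.cong) auto
  also have "\<dots> = cf u v (gdeg G z) * (phi z * k z)"
    using fincar gdeg_carrier[OF zc] by (simp add: sum.delta')
  also have "\<dots> = phi w * k z"
    unfolding wz phi_concat[OF uc zc] cf_def by (simp only: ac_simps)
  finally show ?thesis using lhs by simp
qed


definition gens :: "('g \<Rightarrow> 'g \<Rightarrow> 'k) \<Rightarrow> nat \<Rightarrow> nat \<Rightarrow> ('g list \<Rightarrow> 'k) set" where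
  "gens qq d n = {tens (length u) (basis_vec u) (tens m k (basis_vec v)) | u v m k.
          set u \<subseteq> X \<and> set v \<subseteq> X \<and> 2 \<le> m \<and> m \<le> d \<and> k \<in> ker_Q (rtri G) X qq m \<and>
          length u + m + length v = n}"

lemma dcover_gens: "dcover_ideal_deg (rtri G) X qq d n = module.span (\<lambda>(c::'k) f w. c * f w) (gens qq d n)"
  unfolding dcover_ideal_deg_def gens_def ..

lemma gen_in_span:
  assumes "set u \<subseteq> X" "set v \<subseteq> X" "2 \<le> m" "m \<le> d" "k \<in> ker_Q (rtri G) X q m"
    "length u + m + length v = n"
  shows "Phi (tens (length u) (basis_vec u) (tens m k (basis_vec v))) \<in> module.span (\<lambda>(c::'k) f w. c * f w) (gens q' d n)"
proof -
  have kt: "k \<in> tensor_space X m" using assms(5) unfolding ker_Q_def by auto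
  have eq: "Phi (tens (length u) (basis_vec u) (tens m k (basis_vec v))) =
     (\<Sum>h\<in>carrier G. (\<lambda>w. cf u v h * tens (length u) (basis_vec u) (tens m (Phi (res h k)) (basis_vec v)) w))"
    by (rule ext) (simp only: sum_fun_apply gen_decomp[OF assms(1) kt])
  have "(\<lambda>w. cf u v h * tens (length u) (basis_vec u) (tens m (Phi (res h k)) (basis_vec v)) w)
      \<in> module.span (\<lambda>(c::'k) f w. c * f w) (gens q' d n)" for h
  proof -
    have "Phi (res h k) \<in> ker_Q (rtri G) X q' m" using ker_map ker_res assms(5) by blast
    then have "tens (length u) (basis_vec u) (tens m (Phi (res h k)) (basis_vec v)) \<in> gens q' d n"
      unfolding gens_def using assms by blast
    then have "tens (length u) (basis_vec u) (tens m (Phi (res h k)) (basis_vec v)) \<in> module.span (\<lambda>(c::'k) f w. c * f w) (gens q' d n)"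
      by (rule module.span_base[OF fmod])
    then show ?thesis by (rule module.span_scale[OF fmod])
  qed
  then show ?thesis unfolding eq by (intro module.span_sum[OF fmod])
qed

lemma Phi_add: "Phi (f + g) = Phi f + Phi g"
  unfolding Phi_def by (simp add: fun_eq_iff algebra_simps)

lemma Phi_scale: "Phi (\<lambda>w. c * f w) = (\<lambda>w. c * Phi f w)"
  unfolding Phi_def by (simp add: fun_eq_iff algebra_simps)

lemma Phi_zero: "Phi 0 = 0" "Phi (\<lambda>_. 0) = (\<lambda>_. 0)"
  unfolding Phi_def by (simp_all add: fun_eq_iff)

lemma dcover_map: "Phi ` dcover_ideal_deg (rtri G) X q d n \<subseteq> dcover_ideal_deg (rtri G) X q' d n"
proof -
  let ?T = "{f. Phi f \<in> module.span (\<lambda>(c::'k) f w. c * f w) (gens q' d n)}"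
  have sub: "module.subspace (\<lambda>(c::'k) f w. c * f w) ?T"
  proof (rule module.subspaceI[OF fmod])
    show "0 \<in> ?T" using Phi_zero module.span_zero[OF fmod] by simp
  next
    fix x y assume "x \<in> ?T" "y \<in> ?T"
    then show "x + y \<in> ?T" using module.span_add[OF fmod] Phi_add by simp
  next
    fix c x assume "x \<in> ?T"
    then show "(\<lambda>w. c * x w) \<in> ?T" using module.span_scale[OF fmod] Phi_scale by simp
  qed
  have "gens q d n \<subseteq> ?T"
  proof
    fix g assume "g \<in> gens q d n"
    then obtain u v m k where g: "g = tens (length u) (basis_vec u) (tens m k (basis_vec v))"
      "set u \<subseteq> X" "set v \<subseteq> X" "2 \<le> m" "m \<le> d" "k \<in> ker_Q (rtri G) X q m"
      "length u + m + length v = n" unfolding gens_def by blast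
    show "g \<in> ?T" unfolding g(1) using gen_in_span[OF g(2-7)] by simp
  qed
  then have "module.span (\<lambda>(c::'k) f w. c * f w) (gens q d n) \<subseteq> ?T"
    using module.span_minimal[OF fmod] sub by blast
  then show ?thesis unfolding dcover_gens by blast
qed

lemma nichols_map: "Phi ` nichols_ideal_deg (rtri G) X q n \<subseteq> nichols_ideal_deg (rtri G) X q' n"
  unfolding nichols_ideal_deg_def using ker_map Phi_zero by auto

end

lemma phiacc_inv: "phiacc G (\<lambda>a b. inverse (t a b)) p w = inverse (phiacc G t p w)"
  by (induction w arbitrary: p) (simp_all add: inverse_mult_distrib)

lemma phiacc_nz:
  assumes "group G" "group_2cocycle G t" "p \<in> carrier G" "set w \<subseteq> carrier G"
  shows "phiacc G t p w \<noteq> 0"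
  using assms(3,4)
proof (induction w arbitrary: p)
  case Nil then show ?case by simp
next
  case (Cons x w)
  then have "t p x \<noteq> 0" using assms(2) unfolding group_2cocycle_def by auto
  moreover have "p \<otimes>\<^bsub>G\<^esub> x \<in> carrier G" using Cons.prems assms(1) by (simp add: group.is_monoid monoid.m_closed)
  ultimately show ?case using Cons by simp
qed

lemma gen_tensor:
  assumes "set u \<subseteq> X" "set v \<subseteq> X" "k \<in> tensor_space X m" "length u + m + length v = n"
  shows "tens (length u) (basis_vec u) (tens m k (basis_vec v)) \<in> tensor_space X n"
  unfolding tensor_space_def
proof (intro CollectI allI impI)
  fix w assume nz: "tens (length u) (basis_vec u) (tens m k (basis_vec v)) w \<noteq> 0"
  define z where "z = take m (drop (length u) w)"
  have c: "take (length u) w = u" "drop m (drop (length u) w) = v" "k z \<noteq> 0"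
    using nz unfolding tens_def basis_vec_def z_def by (auto split: if_splits)
  have zw: "z \<in> words X m" using c(3) assms(3) unfolding tensor_space_def by auto
  have "w = take (length u) w @ drop (length u) w" by simp
  also have "drop (length u) w = z @ drop m (drop (length u) w)" unfolding z_def by (rule append_take_drop_id[symmetric])
  finally have "w = u @ z @ v" using c by simp
  then show "w \<in> words X n" using zw assms unfolding words_def by auto
qed

lemma dcover_tensor:
  fixes X :: "'g set" and qq :: "'g \<Rightarrow> 'g \<Rightarrow> 'k::field"
  shows "dcover_ideal_deg tri X qq d n \<subseteq> tensor_space X n"
proof -
  have sub: "module.subspace (\<lambda>(c::'k::field) f w. c * f w) (tensor_space X n :: ('g list \<Rightarrow> 'k) set)"
    by (rule module.subspaceI[OF fmod]) (auto simp: tensor_space_def, metis add.right_neutral)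
  have "{tens (length u) (basis_vec u) (tens m k (basis_vec v)) | u v m k.
          set u \<subseteq> X \<and> set v \<subseteq> X \<and> 2 \<le> m \<and> m \<le> d \<and> k \<in> ker_Q tri X qq m \<and>
          length u + m + length v = n} \<subseteq> tensor_space X n"
  proof
    fix g assume "g \<in> {tens (length u) (basis_vec u) (tens m k (basis_vec v)) | u v m k.
          set u \<subseteq> X \<and> set v \<subseteq> X \<and> 2 \<le> m \<and> m \<le> d \<and> k \<in> ker_Q tri X qq m \<and>
          length u + m + length v = n}"
    then obtain u v m k where g: "g = tens (length u) (basis_vec u) (tens m k (basis_vec v))"
      "set u \<subseteq> X" "set v \<subseteq> X" "k \<in> ker_Q tri X qq m"
      "length u + m + length v = n" by blast
    have "k \<in> tensor_space X m" using g(4) unfolding ker_Q_def by auto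
    then show "g \<in> tensor_space X n" unfolding g(1) using gen_tensor g(2,3,5) by blast
  qed
  then show ?thesis unfolding dcover_ideal_deg_def using module.span_minimal[OF fmod] sub by blast
qed

lemma nichols_tensor: "nichols_ideal_deg tri X qq n \<subseteq> tensor_space X n"
  unfolding nichols_ideal_deg_def ker_Q_def by (auto simp: tensor_space_def)

lemma transfer:
  assumes A: "twist_setup G X q q' t" and B: "twist_setup G X q' q s"
    and inv: "\<forall>w. set w \<subseteq> carrier G \<longrightarrow> phiacc G t \<one>\<^bsub>G\<^esub> w * phiacc G s \<one>\<^bsub>G\<^esub> w = 1"
    and H: "nichols_eq_dcover (rtri G) X q d"
  shows "nichols_eq_dcover (rtri G) X q' d"
proof -
  interpret A: twist_setup G X q q' t by (rule A)
  interpret B: twist_setup G X q' q s by (rule B)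
  have bck: "A.Phi (B.Phi f) = f" if "f \<in> tensor_space X n" for f n
  proof
    fix w
    show "A.Phi (B.Phi f) w = f w"
    proof (cases "f w = 0")
      case True then show ?thesis unfolding A.Phi_def B.Phi_def by simp
    next
      case False
      then have "w \<in> words X n" using that unfolding tensor_space_def by auto
      then have "set w \<subseteq> carrier G" using A.words_carrier by blast
      then have "A.phi w * B.phi w = 1" using inv unfolding A.phi_def B.phi_def by blast
      then show ?thesis unfolding A.Phi_def B.Phi_def by (simp add: mult.assoc[symmetric])
    qed
  qed
  have img: "Y' = A.Phi ` Y" if "A.Phi ` Y \<subseteq> Y'" "B.Phi ` Y' \<subseteq> Y" "Y' \<subseteq> tensor_space X n" for Y Y' n
  proof
    show "A.Phi ` Y \<subseteq> Y'" by fact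
    show "Y' \<subseteq> A.Phi ` Y"
    proof
      fix x assume x: "x \<in> Y'"
      then have "x = A.Phi (B.Phi x)" using bck that(3) by auto
      moreover have "B.Phi x \<in> Y" using that(2) x by blast
      ultimately show "x \<in> A.Phi ` Y" by blast
    qed
  qed
  show ?thesis unfolding nichols_eq_dcover_def
  proof
    fix n
    have "dcover_ideal_deg (rtri G) X q' d n = A.Phi ` dcover_ideal_deg (rtri G) X q d n"
      using img[OF A.dcover_map B.dcover_map dcover_tensor] .
    also have "\<dots> = A.Phi ` nichols_ideal_deg (rtri G) X q n"
      using H unfolding nichols_eq_dcover_def by simp
    also have "\<dots> = nichols_ideal_deg (rtri G) X q' n"
      using img[OF A.nichols_map B.nichols_map nichols_tensor] by simp
    finally show "dcover_ideal_deg (rtri G) X q' d n = nichols_ideal_deg (rtri G) X q' n" .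
  qed
qed

theorem mainTheorem15:
  fixes G :: "('g, 'b) monoid_scheme" and X :: "'g set"
    and q q' :: "'g \<Rightarrow> 'g \<Rightarrow> 'k::field" and d :: nat
  assumes "group G" and "finite (carrier G)"
    and "X \<subseteq> carrier G" and "conj_class G X"
    and "yd_cocycle G X q"
    and "rack_cocycle (rtri G) X q'"
    and "twist_equivalent G X q q'"
    and "2 \<le> d"
  shows "nichols_eq_dcover (rtri G) X q d \<longleftrightarrow> nichols_eq_dcover (rtri G) X q' d"
proof -
  obtain \<sigma> where sc: "group_2cocycle G \<sigma>"
    and tw: "\<forall>x\<in>X. \<forall>y\<in>X. q' x y = \<sigma> x y * q x y * inverse (\<sigma> (rtri G x y) x)"
    using assms(7) unfolding twist_equivalent_def by blast
  define t where "t = (\<lambda>a b. inverse (\<sigma> a b))"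
  have snz: "\<sigma> a b \<noteq> 0" if "a \<in> carrier G" "b \<in> carrier G" for a b
    using sc that unfolding group_2cocycle_def by blast
  have tc: "group_2cocycle G t"
  proof -
    have "\<sigma> x y * \<sigma> (x \<otimes>\<^bsub>G\<^esub> y) z = \<sigma> y z * \<sigma> x (y \<otimes>\<^bsub>G\<^esub> z)"
      if "x \<in> carrier G" "y \<in> carrier G" "z \<in> carrier G" for x y z
      using sc that unfolding group_2cocycle_def by blast
    then have "inverse (\<sigma> x y) * inverse (\<sigma> (x \<otimes>\<^bsub>G\<^esub> y) z) = inverse (\<sigma> y z) * inverse (\<sigma> x (y \<otimes>\<^bsub>G\<^esub> z))"
      if "x \<in> carrier G" "y \<in> carrier G" "z \<in> carrier G" for x y z
      using that by (metis inverse_mult_distrib)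
    then show ?thesis using sc unfolding group_2cocycle_def t_def by auto
  qed
  have rtc: "rtri G x y \<in> carrier G" if "x \<in> X" "y \<in> X" for x y
    using group.rtri_carrier[OF assms(1)] assms(3) that by blast
  have rel1: "\<forall>x\<in>X. \<forall>y\<in>X. q' x y * t x y = t (rtri G x y) x * q x y"
  proof (intro ballI)
    fix x y assume xy: "x \<in> X" "y \<in> X"
    have "\<sigma> x y \<noteq> 0" "\<sigma> (rtri G x y) x \<noteq> 0" using snz xy assms(3) rtc by auto
    then show "q' x y * t x y = t (rtri G x y) x * q x y"
      unfolding t_def using tw xy by (simp add: field_simps)
  qed
  have rel2: "\<forall>x\<in>X. \<forall>y\<in>X. q x y * \<sigma> x y = \<sigma> (rtri G x y) x * q' x y"
  proof (intro ballI)
    fix x y assume xy: "x \<in> X" "y \<in> X"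
    have "\<sigma> x y \<noteq> 0" "\<sigma> (rtri G x y) x \<noteq> 0" using snz xy assms(3) rtc by auto
    then show "q x y * \<sigma> x y = \<sigma> (rtri G x y) x * q' x y"
      using tw xy by (simp add: field_simps)
  qed
  have A: "twist_setup G X q q' t"
    by (rule twist_setup.intro[OF assms(1)]) (unfold_locales, use assms tc rel1 in auto)
  have B: "twist_setup G X q' q \<sigma>"
    by (rule twist_setup.intro[OF assms(1)]) (unfold_locales, use assms sc rel2 in auto)
  have inv1: "\<forall>w. set w \<subseteq> carrier G \<longrightarrow> phiacc G t \<one>\<^bsub>G\<^esub> w * phiacc G \<sigma> \<one>\<^bsub>G\<^esub> w = 1"
  proof (intro allI impI)
    fix w assume "set w \<subseteq> carrier G"
    then have "phiacc G \<sigma> \<one>\<^bsub>G\<^esub> w \<noteq> 0"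
      using phiacc_nz[OF assms(1) sc] assms(1) by (simp add: group.is_monoid monoid.one_closed)
    then show "phiacc G t \<one>\<^bsub>G\<^esub> w * phiacc G \<sigma> \<one>\<^bsub>G\<^esub> w = 1"
      unfolding t_def phiacc_inv by simp
  qed
  have inv2: "\<forall>w. set w \<subseteq> carrier G \<longrightarrow> phiacc G \<sigma> \<one>\<^bsub>G\<^esub> w * phiacc G t \<one>\<^bsub>G\<^esub> w = 1"
    using inv1 by (simp add: mult.commute)
  show ?thesis using transfer[OF A B inv1] transfer[OF B A inv2] by blast
qed

end
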